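(* Let $P$ be a finite set of points in the plane such that no two points of $P$ lie on a line parallel to a boundary ray of the cones (i.e. to a line making angle a multiple of $\pi/3$ with the positive $x$-axis), and let $G$ be the half-$\theta_6$-graph of $P$. Let $u,w\in P$ with $w$ in a positive cone of $u$. Let $m$ be the midpoint of the side of the canonical triangle $T_{uw}$ opposite $u$, and let $\alpha$ be the unsigned angle between the segments $uw$ and $um$. Then there exists a path between $u$ and $w$ in $G$ of length at most $$(\sqrt{3}\cos\alpha+\sin\alpha)\cdot|uw|,$$ all of whose vertices lie in $T_{uw}$.
   Context: Cones: for a point $u$, the plane is partitioned into six cones with apex $u$, bounded by the rays from $u$ at angles $j\pi/3$ ($j=0,\dots,5$) from the positive $x$-axis. In counterclockwise order starting from the positive $x$-axis they are labelled $\overline{C}_1, C_0, \overline{C}_2, C_1, \overline{C}_0, C_2$; the cones $C_0,C_1,C_2$ are called positive and $\overline{C}_0,\overline{C}_1,\overline{C}_2$ negative. Half-$\theta_6$-graph: for each point $u\in P$ and each positive cone $C$ of $u$ containing points of $P\setminus\{u\}$, add an edge from $u$ to the point of $P$ in $C$ whose orthogonal projection onto the bisector of $C$ is closest to $u$; edges are straight segments weighted by Euclidean length $|\cdot|$. Canonical triangle: if $v$ lies in a positive cone $C$ of $u$, $T_{uv}$ is the triangle bounded by the two boundary rays of $C$ and the line through $v$ perpendicular to the bisector of $C$ (an equilateral triangle with apex $u$). For every pair of points exactly one of $T_{uv}$, $T_{vu}$ is defined, and $uv$ is an edge iff its canonical triangle contains no other point of $P$. The length of a path is the sum of the Euclidean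 lengths of its edges. *)

theory Defs
  imports "HOL-Analysis.Analysis"
begin

text \<open>Positive cone C_i (i = 0,1,2) of u has bisector direction bis i, at angle
  pi/2 + 2 pi i / 3, i.e. pi/2, 7pi/6, 11pi/6; it is the cone of half-angle pi/6
  around the bisector.\<close>

definition bis :: "nat \<Rightarrow> complex" where
  "bis i = cis (pi/2 + 2*pi*real i/3)"

text \<open>v lies in the (open) positive cone C_i of u: the angle between v - u and
  the bisector is less than pi/6.  (Under general position no point lies on a
  cone boundary, so open/closed does not matter.)\<close>
definition in_pos_cone :: "complex \<Rightarrow> nat \<Rightarrow> complex \<Rightarrow> bool" where
  "in_pos_cone u i v \<longleftrightarrow> i < 3 \<and> v \<noteq> u \<and>
     inner (v - u) (bis i) > (sqrt 3 / 2) * norm (v - u)"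

definition half_theta6_dedge :: "complex set \<Rightarrow> complex \<Rightarrow> complex \<Rightarrow> bool" where
  "half_theta6_dedge P u v \<longleftrightarrow> u \<in> P \<and> v \<in> P \<and>
     (\<exists>i<3. in_pos_cone u i v \<and>
        (\<forall>x\<in>P. in_pos_cone u i x \<longrightarrow> inner (v - u) (bis i) \<le> inner (x - u) (bis i)))"

definition half_theta6_edge :: "complex set \<Rightarrow> complex \<Rightarrow> complex \<Rightarrow> bool" where
  "half_theta6_edge P u v \<longleftrightarrow> half_theta6_dedge P u v \<or> half_theta6_dedge P v u"

definition canon_tri :: "complex \<Rightarrow> nat \<Rightarrow> complex \<Rightarrow> complex set" where
  "canon_tri u i v = {x. inner (x - u) (bis i) \<ge> (sqrt 3 / 2) * norm (x - u) \<and>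
                         inner (x - u) (bis i) \<le> inner (v - u) (bis i)}"

definition opp_mid :: "complex \<Rightarrow> nat \<Rightarrow> complex \<Rightarrow> complex" where
  "opp_mid u i v = u + of_real (inner (v - u) (bis i)) * bis i"

definition seg_angle :: "complex \<Rightarrow> complex \<Rightarrow> complex \<Rightarrow> real" where
  "seg_angle a b c = arccos (inner (b - a) (c - a) / (norm (b - a) * norm (c - a)))"

definition gen_pos :: "complex set \<Rightarrow> bool" where
  "gen_pos P \<longleftrightarrow> (\<forall>p\<in>P. \<forall>q\<in>P. p \<noteq> q \<longrightarrow>
      (\<forall>k::int. \<not> (\<exists>t::real. q - p = of_real t * cis (real_of_int k * pi / 3))))"

definition is_path :: "complex set \<Rightarrow> complex list \<Rightarrow> bool" where
  "is_path P xs \<longleftrightarrow> xs \<noteq> [] \<and>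
     (\<forall>k. Suc k < length xs \<longrightarrow> half_theta6_edge P (xs ! k) (xs ! Suc k))"

definition path_len :: "complex list \<Rightarrow> real" where
  "path_len xs = (\<Sum>k<length xs - 1. dist (xs ! k) (xs ! Suc k))"

end

theory Submission
  imports Defs
begin


lemma bis0: "bis 0 = \<i>"
  by (simp add: bis_def complex_eq_iff)

lemma bis1: "bis 1 = Complex (- sqrt 3 / 2) (- 1/2)"
proof -
  have e: "pi/2 + 2*pi*real 1/3 = pi/6 + pi" by simp
  have c: "cos (pi/6 + pi) = - sqrt 3/2" "sin (pi/6 + pi) = - 1/2"
    by (simp_all only: cos_periodic_pi sin_periodic_pi cos_30 sin_30)
  show ?thesis unfolding bis_def e using c
    by (simp add: complex_eq_iff)
qed

lemma bis2: "bis 2 = Complex (sqrt 3 / 2) (- 1/2)"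
proof -
  have e: "pi/2 + 2*pi*real 2/3 = - (pi/6) + 2*pi" by simp
  have c: "cos (- (pi/6) + 2*pi) = sqrt 3/2" "sin (- (pi/6) + 2*pi) = - 1/2"
    by (simp_all only: cos_periodic sin_periodic cos_minus sin_minus cos_30 sin_30)
  show ?thesis unfolding bis_def e using c
    by (simp add: complex_eq_iff)
qed



abbreviation s3 :: real where "s3 \<equiv> sqrt 3"

definition fY :: "nat \<Rightarrow> complex \<Rightarrow> real" where "fY i v = inner v (bis i)"
definition fX :: "nat \<Rightarrow> complex \<Rightarrow> real" where "fX i v = inner v (bis i * (- \<i>))"

lemma fY0: "fY 0 v = Im v" and fX0: "fX 0 v = Re v"
  by (simp_all add: fY_def fX_def bis0 inner_complex_def)
lemma bis1': "bis (Suc 0) = Complex (- sqrt 3 / 2) (- 1/2)" using bis1 by simp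
lemma bis2': "bis (Suc (Suc 0)) = Complex (sqrt 3 / 2) (- 1/2)" using bis2 by (simp add: numeral_2_eq_2)

lemma fY1: "fY 1 v = - (s3/2) * Re v - Im v / 2" and fX1: "fX 1 v = - Re v / 2 + (s3/2) * Im v"
  by (simp_all add: fY_def fX_def bis1' inner_complex_def)
lemma fY2: "fY 2 v = (s3/2) * Re v - Im v / 2" and fX2: "fX 2 v = - Re v / 2 - (s3/2) * Im v"
  by (simp_all add: fY_def fX_def bis2 inner_complex_def)

lemmas fY1' = fY1[unfolded One_nat_def] and fX1' = fX1[unfolded One_nat_def]
lemmas fY2' = fY2[unfolded numeral_2_eq_2] and fX2' = fX2[unfolded numeral_2_eq_2]
lemmas frm = fY0 fX0 fY1 fX1 fY2 fX2 fY1' fX1' fY2' fX2'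

lemma i3_cases: "i < (3::nat) \<Longrightarrow> i = 0 \<or> i = 1 \<or> i = 2" by auto

lemma fY_diff: "fY i (a - b) = fY i a - fY i b" and fX_diff: "fX i (a - b) = fX i a - fX i b"
  and fY_add: "fY i (a + b) = fY i a + fY i b" and fX_add: "fX i (a + b) = fX i a + fX i b"
  and fY_minus: "fY i (- a) = - fY i a" and fX_minus: "fX i (- a) = - fX i a"
  by (simp_all add: fY_def fX_def inner_diff_left inner_add_left)

lemma sq3: "s3 * s3 = 3" "s3^2 = 3" "s3 * (s3 * x) = 3 * x" by (simp_all add: mult.assoc[symmetric])

lemma frame_norm2: assumes "i < 3" shows "(norm v)^2 = (fX i v)^2 + (fY i v)^2"
proof -
  have n: "(norm v)^2 = (Re v)^2 + (Im v)^2" by (simp add: cmod_power2)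
  have "(fX i v)^2 + (fY i v)^2 = (Re v)^2 + (Im v)^2"
    using i3_cases[OF assms]
    apply (elim disjE)
      apply (simp_all add: frm power2_eq_square algebra_simps)
    done
  thus ?thesis using n by simp
qed

lemma frame_norm: assumes "i < 3" shows "norm v = sqrt ((fX i v)^2 + (fY i v)^2)"
proof -
  have "norm v = sqrt ((norm v)^2)" by simp
  thus ?thesis using frame_norm2[OF assms, of v] by simp
qed

lemma nxt1: assumes "i < 3"
  shows "fY ((i+1) mod 3) v = - (s3/2) * fX i v - fY i v / 2"
    "fX ((i+1) mod 3) v = - fX i v / 2 + (s3/2) * fY i v"
  using i3_cases[OF assms]
  by (elim disjE; simp add: frm field_simps)+

lemma nxt2: assumes "i < 3"
  shows "fY ((i+2) mod 3) v = (s3/2) * fX i v - fY i v / 2"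
    "fX ((i+2) mod 3) v = - fX i v / 2 - (s3/2) * fY i v"
  using i3_cases[OF assms]
  by (elim disjE; simp add: frm field_simps)+

lemma cone_strict_iff: fixes x y :: real
  shows "y > (sqrt 3 / 2) * sqrt (x^2 + y^2) \<longleftrightarrow> y > sqrt 3 * \<bar>x\<bar>"
proof -
  have e1: "((sqrt 3 / 2) * sqrt (x^2 + y^2))^2 = 3/4*(x^2+y^2)"
    by (simp add: power_mult_distrib power_divide)
  have e2: "(sqrt 3 * \<bar>x\<bar>)^2 = 3 * x^2" by (simp add: power_mult_distrib)
  have n1: "(sqrt 3 / 2) * sqrt (x^2 + y^2) \<ge> 0" by simp
  have n2: "sqrt 3 * \<bar>x\<bar> \<ge> 0" by simp
  show ?thesis
  proof
    assume h: "y > (sqrt 3 / 2) * sqrt (x^2 + y^2)"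
    have y0: "y > 0" using h n1 by linarith
    have "((sqrt 3 / 2) * sqrt (x^2 + y^2))^2 < y^2" using power_strict_mono[OF h n1] by simp
    hence "(sqrt 3 * \<bar>x\<bar>)^2 < y^2" using e1 e2 by simp
    thus "y > sqrt 3 * \<bar>x\<bar>" using y0 power2_less_imp_less by fastforce
  next
    assume h: "y > sqrt 3 * \<bar>x\<bar>"
    have y0: "y > 0" using h n2 by linarith
    have "(sqrt 3 * \<bar>x\<bar>)^2 < y^2" using power_strict_mono[OF h n2] by simp
    hence "((sqrt 3 / 2) * sqrt (x^2 + y^2))^2 < y^2" using e1 e2 by simp
    thus "y > (sqrt 3 / 2) * sqrt (x^2 + y^2)" using y0 power2_less_imp_less by fastforce
  qed
qed

lemma cone_weak_iff: fixes x y :: real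
  shows "y \<ge> (sqrt 3 / 2) * sqrt (x^2 + y^2) \<longleftrightarrow> y \<ge> sqrt 3 * \<bar>x\<bar>"
proof -
  have e1: "((sqrt 3 / 2) * sqrt (x^2 + y^2))^2 = 3/4*(x^2+y^2)"
    by (simp add: power_mult_distrib power_divide)
  have e2: "(sqrt 3 * \<bar>x\<bar>)^2 = 3 * x^2" by (simp add: power_mult_distrib)
  have n1: "(sqrt 3 / 2) * sqrt (x^2 + y^2) \<ge> 0" by simp
  have n2: "sqrt 3 * \<bar>x\<bar> \<ge> 0" by simp
  show ?thesis
  proof
    assume h: "y \<ge> (sqrt 3 / 2) * sqrt (x^2 + y^2)"
    have y0: "y \<ge> 0" using h n1 by linarith
    have "((sqrt 3 / 2) * sqrt (x^2 + y^2))^2 \<le> y^2" using power_mono[OF h n1] by simp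
    hence "(sqrt 3 * \<bar>x\<bar>)^2 \<le> y^2" using e1 e2 by simp
    thus "y \<ge> sqrt 3 * \<bar>x\<bar>" using y0 power2_le_imp_le by fastforce
  next
    assume h: "y \<ge> sqrt 3 * \<bar>x\<bar>"
    have y0: "y \<ge> 0" using h n2 by linarith
    have "(sqrt 3 * \<bar>x\<bar>)^2 \<le> y^2" using power_mono[OF h n2] by simp
    hence "((sqrt 3 / 2) * sqrt (x^2 + y^2))^2 \<le> y^2" using e1 e2 by simp
    thus "y \<ge> (sqrt 3 / 2) * sqrt (x^2 + y^2)" using y0 power2_le_imp_le by fastforce
  qed
qed
lemma in_pos_cone_iff: "in_pos_cone u i v \<longleftrightarrow> i < 3 \<and> fY i (v - u) > s3 * \<bar>fX i (v - u)\<bar>"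
proof (cases "i < 3")
  case True
  have n: "norm (v - u) = sqrt ((fX i (v-u))^2 + (fY i (v-u))^2)" using frame_norm[OF True] .
  have "(inner (v - u) (bis i) > (sqrt 3 / 2) * norm (v - u)) \<longleftrightarrow> fY i (v - u) > s3 * \<bar>fX i (v - u)\<bar>"
    unfolding n fY_def[symmetric] by (rule cone_strict_iff)
  moreover have "fY i (v - u) > s3 * \<bar>fX i (v - u)\<bar> \<Longrightarrow> v \<noteq> u"
    by (auto simp: fY_def fX_def)
  ultimately show ?thesis using True unfolding in_pos_cone_def by blast
qed (simp add: in_pos_cone_def)

lemma canon_tri_iff: assumes "i < 3"
  shows "x \<in> canon_tri u i v \<longleftrightarrow> fY i (x-u) \<ge> s3 * \<bar>fX i (x-u)\<bar> \<and> fY i (x-u) \<le> fY i (v-u)"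
proof -
  have n: "norm (x - u) = sqrt ((fX i (x-u))^2 + (fY i (x-u))^2)" using frame_norm[OF assms] .
  have "(inner (x - u) (bis i) \<ge> (sqrt 3 / 2) * norm (x - u)) \<longleftrightarrow> fY i (x - u) \<ge> s3 * \<bar>fX i (x - u)\<bar>"
    unfolding n fY_def[symmetric] by (rule cone_weak_iff)
  thus ?thesis unfolding canon_tri_def fY_def by simp
qed

lemma gp_basic: assumes "gen_pos P" "p \<in> P" "q \<in> P" "p \<noteq> q"
  shows "Im (q - p) \<noteq> 0 \<and> Im (q - p) \<noteq> s3 * Re (q - p) \<and> Im (q - p) \<noteq> - s3 * Re (q - p)"
proof -
  let ?v = "q - p"
  have no: "\<And>k::int. \<And>t. ?v \<noteq> of_real t * cis (real_of_int k * pi / 3)"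
    using assms unfolding gen_pos_def by blast
  have c1: "cis (real_of_int 1 * pi / 3) = Complex (1/2) (s3/2)"
    by (simp add: complex_eq_iff cos_60 sin_60)
  have e2: "real_of_int 2 * pi / 3 = pi - pi/3" by simp
  have c2: "cis (real_of_int 2 * pi / 3) = Complex (-1/2) (s3/2)"
  proof -
    have "cos (pi - pi/3) = - 1/2" "sin (pi - pi/3) = s3/2"
      by (simp_all only: cos_pi_minus sin_pi_minus cos_60 sin_60)
    thus ?thesis unfolding e2 by (simp add: complex_eq_iff)
  qed
  have "Im ?v \<noteq> 0"
  proof
    assume h: "Im ?v = 0"
    have "?v = of_real (Re ?v) * cis (real_of_int 0 * pi / 3)" using h by (simp add: complex_eq_iff)
    thus False using no by blast
  qed
  moreover have "Im ?v \<noteq> s3 * Re ?v"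
  proof
    assume h: "Im ?v = s3 * Re ?v"
    have "?v = of_real (2 * Re ?v) * cis (real_of_int 1 * pi / 3)" unfolding c1 using h by (simp add: complex_eq_iff)
    thus False using no by blast
  qed
  moreover have "Im ?v \<noteq> - s3 * Re ?v"
  proof
    assume h: "Im ?v = - s3 * Re ?v"
    have "?v = of_real (- 2 * Re ?v) * cis (real_of_int 2 * pi / 3)" unfolding c2 using h by (simp add: complex_eq_iff algebra_simps)
    thus False using no by blast
  qed
  ultimately show ?thesis by blast
qed

lemma gp_frame: assumes "gen_pos P" "p \<in> P" "q \<in> P" "p \<noteq> q" "i < 3"
  shows "fY i (q - p) \<noteq> 0 \<and> fY i (q - p) \<noteq> s3 * fX i (q - p) \<and> fY i (q - p) \<noteq> - s3 * fX i (q - p)"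
proof -
  note g = gp_basic[OF assms(1-4)]
  show ?thesis using i3_cases[OF assms(5)] g
    by (elim disjE; simp add: frm field_simps; smt (verit))+
qed

lemma s3pos: "s3 > 0" by simp
lemma s3x: "s3 * (s3 * x) = 3 * x" by (simp add: mult.assoc[symmetric])

lemma R1: fixes X Y :: real assumes "Y > s3 * \<bar>X\<bar>"
  shows "sqrt (X^2 + Y^2) \<le> s3 * Y - \<bar>X\<bar>"
proof -
  have a0: "s3 * \<bar>X\<bar> \<ge> 0" by simp
  have Y0: "Y > 0" using assms a0 by linarith
  have "\<bar>X\<bar> \<le> s3 * \<bar>X\<bar>"
  proof -
    have "1 \<le> s3" by simp
    thus ?thesis by (simp add: mult_right_mono[of 1 s3 "\<bar>X\<bar>", simplified])
  qed
  hence "\<bar>X\<bar> < Y" using assms by linarith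
  have "s3 * Y > Y" using Y0 by (simp add: s3pos)
  have rhs0: "s3 * Y - \<bar>X\<bar> \<ge> 0"
  proof -
    have "s3 * Y \<ge> Y" using Y0 by simp
    thus ?thesis using \<open>\<bar>X\<bar> < Y\<close> by linarith
  qed
  have k: "s3 * \<bar>X\<bar> * Y \<le> Y * Y" using assms Y0 by (simp add: mult_right_mono)
  have "(s3 * Y - \<bar>X\<bar>)^2 = 3 * Y^2 - 2 * (s3 * \<bar>X\<bar> * Y) + X^2"
    by (simp add: power2_eq_square algebra_simps s3x)
  also have "\<dots> \<ge> X^2 + Y^2" using k by (simp add: power2_eq_square)
  finally have "X^2 + Y^2 \<le> (s3 * Y - \<bar>X\<bar>)^2" .
  hence "sqrt (X^2 + Y^2) \<le> sqrt ((s3 * Y - \<bar>X\<bar>)^2)" by (rule real_sqrt_le_mono)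
  also have "\<dots> = s3 * Y - \<bar>X\<bar>" using rhs0 by simp
  finally show ?thesis .
qed

lemma cone_add: fixes x1 x2 y1 y2 :: real
  assumes "y1 \<ge> s3 * \<bar>x1\<bar>" "y2 \<ge> s3 * \<bar>x2\<bar>" shows "y1 + y2 \<ge> s3 * \<bar>x1 + x2\<bar>"
proof -
  have "s3 * \<bar>x1 + x2\<bar> \<le> s3 * (\<bar>x1\<bar> + \<bar>x2\<bar>)" by (simp add: abs_triangle_ineq)
  also have "\<dots> = s3 * \<bar>x1\<bar> + s3 * \<bar>x2\<bar>" by (rule distrib_left)
  finally show ?thesis using assms by linarith
qed

lemma s3abs: "s3 * \<bar>z\<bar> = \<bar>s3 * z\<bar>" by (simp add: abs_mult)
lemma abs_lt: fixes z t :: real shows "s3 * \<bar>z\<bar> < t \<longleftrightarrow> s3 * z < t \<and> - (s3 * z) < t"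
  unfolding s3abs by (rule abs_less_iff)
lemma abs_le: fixes z t :: real shows "s3 * \<bar>z\<bar> \<le> t \<longleftrightarrow> s3 * z \<le> t \<and> - (s3 * z) \<le> t"
  unfolding s3abs by (rule abs_le_iff)

lemma R3L: fixes dx dy :: real assumes "dy > 0" "dy < s3 * dx"
  shows "(s3/2)*dx + dy/2 > s3 * \<bar>dx/2 - (s3/2)*dy\<bar>"
  unfolding abs_lt using assms by (simp add: algebra_simps s3x)

lemma R3R: fixes dx dy :: real assumes "dy > 0" "dy < - s3 * dx"
  shows "-(s3/2)*dx + dy/2 > s3 * \<bar>dx/2 + (s3/2)*dy\<bar>"
  unfolding abs_lt using assms by (simp add: algebra_simps s3x)

lemma Rneg2: fixes ex ey :: real assumes "(s3/2)*ex - ey/2 > s3 * \<bar>- ex/2 - (s3/2)*ey\<bar>"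
  shows "ey < 0"
  using assms unfolding abs_lt by (simp add: algebra_simps s3x)

lemma Rneg1: fixes ex ey :: real assumes "-(s3/2)*ex - ey/2 > s3 * \<bar>- ex/2 + (s3/2)*ey\<bar>"
  shows "ey < 0"
  using assms unfolding abs_lt by (simp add: algebra_simps s3x)

lemma R4L: fixes Dx Dy X Y dx dy :: real
  assumes c1: "-(s3/2)*Dx - Dy/2 \<ge> s3 * \<bar>- Dx/2 + (s3/2)*Dy\<bar>"
    and c2: "-(s3/2)*Dx - Dy/2 \<le> (s3/2)*dx + dy/2"
    and w: "Y > s3 * \<bar>X\<bar>" and a: "Y - dy > s3 * \<bar>X - dx\<bar>"
  shows "Y + Dy \<ge> s3 * \<bar>X + Dx\<bar> \<and> Y + Dy \<le> Y \<and> Dy \<ge> s3 * Dx"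
proof -
  from c1 have h1: "Dy \<le> 0" and h2: "Dy \<ge> s3 * Dx" unfolding abs_le by (simp_all add: algebra_simps s3x)
  from c2 have h3: "s3 * Dx + Dy \<ge> - (s3 * dx + dy)" by (simp add: algebra_simps)
  from w have w1: "Y > s3 * X" "Y > - (s3 * X)" unfolding abs_lt[symmetric] by (simp_all add: abs_lt)
  from a have a1: "Y - dy > - (s3 * (X - dx))" unfolding abs_lt by simp
  show ?thesis unfolding abs_le using h1 h2 h3 w1 a1 by (simp add: algebra_simps)
qed

lemma R4R: fixes Dx Dy X Y dx dy :: real
  assumes c1: "(s3/2)*Dx - Dy/2 \<ge> s3 * \<bar>- Dx/2 - (s3/2)*Dy\<bar>"
    and c2: "(s3/2)*Dx - Dy/2 \<le> -(s3/2)*dx + dy/2"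
    and w: "Y > s3 * \<bar>X\<bar>" and a: "Y - dy > s3 * \<bar>X - dx\<bar>"
  shows "Y + Dy \<ge> s3 * \<bar>X + Dx\<bar> \<and> Y + Dy \<le> Y \<and> s3 * Dx + Dy \<ge> 0"
proof -
  from c1 have h1: "Dy \<le> 0" and h2: "s3 * Dx + Dy \<ge> 0" unfolding abs_le by (simp_all add: algebra_simps s3x)
  from c2 have h3: "Dy - s3 * Dx \<ge> s3 * dx - dy" by (simp add: algebra_simps)
  from w have w1: "Y > s3 * X" "Y > - (s3 * X)" unfolding abs_lt[symmetric] by (simp_all add: abs_lt)
  from a have a1: "Y - dy > s3 * (X - dx)" unfolding abs_lt by simp
  show ?thesis unfolding abs_le using h1 h2 h3 w1 a1 by (simp add: algebra_simps)
qed

lemma edge_sym: "half_theta6_edge P u v \<longleftrightarrow> half_theta6_edge P v u"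
  unfolding half_theta6_edge_def by blast

lemma path_len_Cons2: "path_len (x # y # zs) = dist x y + path_len (y # zs)"
proof -
  have "path_len (x # y # zs) = (\<Sum>k<Suc (length zs). dist ((x#y#zs) ! k) ((x#y#zs) ! Suc k))"
    by (simp add: path_len_def)
  also have "\<dots> = dist x y + (\<Sum>k<length zs. dist ((y#zs) ! k) ((y#zs) ! Suc k))"
    by (subst sum.lessThan_Suc_shift) simp
  also have "\<dots> = dist x y + path_len (y # zs)" by (simp add: path_len_def)
  finally show ?thesis .
qed

lemma is_path_Cons2: "is_path P (x # y # zs) \<longleftrightarrow> half_theta6_edge P x y \<and> is_path P (y # zs)"
proof
  assume h: "is_path P (x # y # zs)"
  have "Suc 0 < length (x # y # zs)" by simp
  hence "half_theta6_edge P ((x#y#zs) ! 0) ((x#y#zs) ! Suc 0)" using h unfolding is_path_def by blast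
  hence "half_theta6_edge P x y" by simp
  moreover have "is_path P (y # zs)" unfolding is_path_def
  proof (intro conjI allI impI)
    fix k assume "Suc k < length (y # zs)"
    hence "Suc (Suc k) < length (x # y # zs)" by simp
    hence "half_theta6_edge P ((x#y#zs) ! Suc k) ((x#y#zs) ! Suc (Suc k))" using h unfolding is_path_def by blast
    thus "half_theta6_edge P ((y # zs) ! k) ((y # zs) ! Suc k)" by simp
  qed simp
  ultimately show "half_theta6_edge P x y \<and> is_path P (y # zs)" ..
next
  assume h: "half_theta6_edge P x y \<and> is_path P (y # zs)"
  show "is_path P (x # y # zs)" unfolding is_path_def
  proof (intro conjI allI impI)
    fix k assume k: "Suc k < length (x # y # zs)"
    show "half_theta6_edge P ((x # y # zs) ! k) ((x # y # zs) ! Suc k)"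
    proof (cases k)
      case 0 thus ?thesis using h by simp
    next
      case (Suc m)
      hence "Suc m < length (y # zs)" using k by simp
      hence "half_theta6_edge P ((y#zs) ! m) ((y#zs) ! Suc m)" using h unfolding is_path_def by blast
      thus ?thesis using Suc by simp
    qed
  qed simp
qed

lemma is_path_rev: assumes "is_path P xs" shows "is_path P (rev xs)"
  unfolding is_path_def
proof (intro conjI allI impI)
  show "rev xs \<noteq> []" using assms by (simp add: is_path_def)
  fix k assume k: "Suc k < length (rev xs)"
  define n where "n = length xs"
  define m where "m = n - Suc (Suc k)"
  have m1: "Suc m < length xs" and e1: "n - Suc k = Suc m" and e2: "n - Suc (Suc k) = m"
    using k unfolding m_def n_def by auto
  have "half_theta6_edge P (xs ! m) (xs ! Suc m)" using assms m1 unfolding is_path_def by blast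
  hence "half_theta6_edge P (xs ! Suc m) (xs ! m)" by (simp add: edge_sym)
  moreover have "rev xs ! k = xs ! (n - Suc k)" using k by (simp add: rev_nth n_def)
  moreover have "rev xs ! Suc k = xs ! (n - Suc (Suc k))" using k by (simp add: rev_nth n_def)
  ultimately show "half_theta6_edge P (rev xs ! k) (rev xs ! Suc k)" using e1 e2 by simp
qed

lemma path_len_rev: "path_len (rev xs) = path_len xs"
proof -
  define n where "n = length xs - 1"
  define f where "f j = dist (xs ! j) (xs ! Suc j)" for j
  have "path_len (rev xs) = (\<Sum>k<n. dist (rev xs ! k) (rev xs ! Suc k))"
    by (simp add: path_len_def n_def)
  also have "\<dots> = (\<Sum>k<n. f (n - Suc k))"
  proof (rule sum.cong[OF refl])
    fix k assume "k \<in> {..<n}"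
    hence k: "k < n" by simp
    have a: "rev xs ! k = xs ! (length xs - Suc k)" using k by (simp add: rev_nth n_def)
    have b: "rev xs ! Suc k = xs ! (length xs - Suc (Suc k))" using k by (simp add: rev_nth n_def)
    have c: "length xs - Suc k = Suc (n - Suc k)" "length xs - Suc (Suc k) = n - Suc k" using k by (auto simp: n_def)
    show "dist (rev xs ! k) (rev xs ! Suc k) = f (n - Suc k)"
      unfolding a b c f_def by (simp add: dist_commute)
  qed
  also have "\<dots> = (\<Sum>k<n. f k)" by (rule sum.nat_diff_reindex)
  also have "\<dots> = path_len xs" by (simp add: path_len_def n_def f_def)
  finally show ?thesis .
qed

definition goodp :: "complex set \<Rightarrow> complex \<Rightarrow> complex \<Rightarrow> complex set \<Rightarrow> real \<Rightarrow> bool" where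
  "goodp P u w S L \<longleftrightarrow> (\<exists>xs. is_path P xs \<and> hd xs = u \<and> last xs = w \<and> set xs \<subseteq> S \<and> path_len xs \<le> L)"

lemma goodp_rev: "goodp P w a S L \<Longrightarrow> goodp P a w S L"
  unfolding goodp_def
proof (elim exE conjE)
  fix xs assume h: "is_path P xs" "hd xs = w" "last xs = a" "set xs \<subseteq> S" "path_len xs \<le> L"
  have ne: "xs \<noteq> []" using h(1) by (simp add: is_path_def)
  show "\<exists>xs. is_path P xs \<and> hd xs = a \<and> last xs = w \<and> set xs \<subseteq> S \<and> path_len xs \<le> L"
    by (rule exI[of _ "rev xs"]) (use h ne in \<open>simp add: is_path_rev path_len_rev hd_rev last_rev\<close>)
qed

lemma goodp_prepend:
  assumes "goodp P a w S L" "half_theta6_edge P u a" "S \<subseteq> S'" "u \<in> S'" "dist u a + L \<le> L'"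
  shows "goodp P u w S' L'"
proof -
  obtain xs where h: "is_path P xs" "hd xs = a" "last xs = w" "set xs \<subseteq> S" "path_len xs \<le> L"
    using assms(1) unfolding goodp_def by blast
  obtain y zs where xs: "xs = y # zs" using h(1) by (cases xs) (auto simp: is_path_def)
  have "is_path P (u # xs)" using h assms(2) xs by (simp add: is_path_Cons2)
  moreover have "path_len (u # xs) = dist u a + path_len xs" using h xs by (simp add: path_len_Cons2)
  moreover have "set (u # xs) \<subseteq> S'" using h(4) assms(3,4) by auto
  moreover have "hd (u # xs) = u" "last (u # xs) = w" using h(3) xs by simp_all
  moreover have "path_len xs + dist u a \<le> L'" using h(5) assms(5) by linarith
  ultimately show ?thesis unfolding goodp_def by (intro exI[of _ "u # xs"]) auto
qed

lemma goodp_edge: "half_theta6_edge P u w \<Longrightarrow> u \<in> S \<Longrightarrow> w \<in> S \<Longrightarrow> dist u w \<le> L \<Longrightarrow> goodp P u w S L"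
  unfolding goodp_def
  by (rule exI[of _ "[u, w]"]) (simp add: is_path_Cons2 path_len_Cons2 is_path_def path_len_def)

lemma mod_facts: assumes "i < (3::nat)"
  shows "(i+1) mod 3 < 3" "(i+2) mod 3 < 3" "((i+1) mod 3 + 1) mod 3 = (i+2) mod 3"
    "((i+2) mod 3 + 2) mod 3 = (i+1) mod 3"
  using i3_cases[OF assms] by auto

lemma fzero: "fX i 0 = 0" "fY i 0 = 0" by (simp_all add: fX_def fY_def)

lemma containP: assumes i: "i < 3" and a: "in_pos_cone u i a"
  shows "canon_tri a i w \<subseteq> canon_tri u i w" "u \<notin> canon_tri a i w"
proof -
  have ac: "fY i (a - u) > s3 * \<bar>fX i (a - u)\<bar>" using a in_pos_cone_iff by blast
  show "canon_tri a i w \<subseteq> canon_tri u i w"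
  proof
    fix x assume "x \<in> canon_tri a i w"
    hence c: "fY i (x-a) \<ge> s3 * \<bar>fX i (x-a)\<bar>" "fY i (x-a) \<le> fY i (w-a)"
      using canon_tri_iff[OF i] by auto
    have e: "x - u = (x - a) + (a - u)" "w - u = (w - a) + (a - u)" by simp_all
    have "fY i (x-u) \<ge> s3 * \<bar>fX i (x-u)\<bar>" unfolding e fX_add fY_add
      using cone_add[OF c(1), of "fX i (a-u)" "fY i (a-u)"] ac by linarith
    moreover have "fY i (x-u) \<le> fY i (w-u)" unfolding e fY_add using c(2) by linarith
    ultimately show "x \<in> canon_tri u i w" using canon_tri_iff[OF i] by auto
  qed
  show "u \<notin> canon_tri a i w"
  proof
    assume "u \<in> canon_tri a i w"
    hence "fY i (u-a) \<ge> s3 * \<bar>fX i (u-a)\<bar>" using canon_tri_iff[OF i] by auto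
    moreover have "fY i (u-a) = - fY i (a-u)" "fX i (u - a) = - fX i (a - u)" by (simp_all add: fY_diff fX_diff)
    ultimately have "s3 * \<bar>fX i (a-u)\<bar> \<le> - fY i (a-u)" by simp
    moreover have "s3 * \<bar>fX i (a-u)\<bar> \<ge> 0" by simp
    ultimately show False using ac by linarith
  qed
qed

lemma containL: assumes i: "i < 3" and a: "in_pos_cone u i a" and w: "in_pos_cone u i w"
  shows "canon_tri w ((i+1) mod 3) a \<subseteq> canon_tri u i w" "u \<notin> canon_tri w ((i+1) mod 3) a"
proof -
  let ?j = "(i+1) mod 3"
  have j: "?j < 3" using mod_facts[OF i] by simp
  define X where "X = fX i (w-u)"
  define Y where "Y = fY i (w-u)"
  define dx where "dx = fX i (w-a)"
  define dy where "dy = fY i (w-a)"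
  have wY: "Y > s3 * \<bar>X\<bar>" using w by (simp add: in_pos_cone_iff X_def Y_def)
  have "fY i (a - u) = Y - dy" "fX i (a - u) = X - dx" by (simp_all add: X_def Y_def dx_def dy_def fX_diff fY_diff)
  hence aY: "Y - dy > s3 * \<bar>X - dx\<bar>" using a by (simp add: in_pos_cone_iff)
  have key: "fY i (x-u) \<ge> s3 * \<bar>fX i (x-u)\<bar> \<and> fY i (x-u) \<le> fY i (w-u) \<and> fY i (x-w) \<ge> s3 * fX i (x-w)"
    if "x \<in> canon_tri w ?j a" for x
  proof -
    have c: "fY ?j (x-w) \<ge> s3 * \<bar>fX ?j (x-w)\<bar>" "fY ?j (x-w) \<le> fY ?j (a-w)"
      using that canon_tri_iff[OF j] by auto
    define Dx where "Dx = fX i (x-w)"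
    define Dy where "Dy = fY i (x-w)"
    have c1: "-(s3/2)*Dx - Dy/2 \<ge> s3 * \<bar>- Dx/2 + (s3/2)*Dy\<bar>"
      using c(1) unfolding nxt1[OF i] Dx_def Dy_def by simp
    have "fX i (a-w) = - dx" "fY i (a-w) = - dy" by (simp_all add: dx_def dy_def fX_diff fY_diff)
    hence c2: "-(s3/2)*Dx - Dy/2 \<le> (s3/2)*dx + dy/2"
      using c(2) unfolding nxt1[OF i] Dx_def Dy_def by simp
    have r: "Y + Dy \<ge> s3 * \<bar>X + Dx\<bar> \<and> Y + Dy \<le> Y \<and> Dy \<ge> s3 * Dx" by (rule R4L[OF c1 c2 wY aY])
    have "x - u = (w - u) + (x - w)" by simp
    hence "fY i (x-u) = Y + Dy" "fX i (x-u) = X + Dx" unfolding X_def Y_def Dx_def Dy_def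
      by (metis fY_add, metis fX_add)
    thus ?thesis using r unfolding Y_def[symmetric] Dx_def Dy_def by simp
  qed
  show "canon_tri w ?j a \<subseteq> canon_tri u i w" using key canon_tri_iff[OF i] by blast
  show "u \<notin> canon_tri w ?j a"
  proof
    assume "u \<in> canon_tri w ?j a"
    hence "fY i (u-w) \<ge> s3 * fX i (u-w)" using key by blast
    moreover have "fY i (u-w) = - Y" "fX i (u-w) = - X" by (simp_all add: X_def Y_def fX_diff fY_diff)
    ultimately have "Y \<le> s3 * X" by simp
    moreover have "s3 * X \<le> s3 * \<bar>X\<bar>" by simp
    ultimately show False using wY by linarith
  qed
qed

lemma containR: assumes i: "i < 3" and a: "in_pos_cone u i a" and w: "in_pos_cone u i w"
  shows "canon_tri w ((i+2) mod 3) a \<subseteq> canon_tri u i w" "u \<notin> canon_tri w ((i+2) mod 3) a"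
proof -
  let ?j = "(i+2) mod 3"
  have j: "?j < 3" using mod_facts[OF i] by simp
  define X where "X = fX i (w-u)"
  define Y where "Y = fY i (w-u)"
  define dx where "dx = fX i (w-a)"
  define dy where "dy = fY i (w-a)"
  have wY: "Y > s3 * \<bar>X\<bar>" using w by (simp add: in_pos_cone_iff X_def Y_def)
  have "fY i (a - u) = Y - dy" "fX i (a - u) = X - dx" by (simp_all add: X_def Y_def dx_def dy_def fX_diff fY_diff)
  hence aY: "Y - dy > s3 * \<bar>X - dx\<bar>" using a by (simp add: in_pos_cone_iff)
  have key: "fY i (x-u) \<ge> s3 * \<bar>fX i (x-u)\<bar> \<and> fY i (x-u) \<le> fY i (w-u) \<and> s3 * fX i (x-w) + fY i (x-w) \<ge> 0"
    if "x \<in> canon_tri w ?j a" for x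
  proof -
    have c: "fY ?j (x-w) \<ge> s3 * \<bar>fX ?j (x-w)\<bar>" "fY ?j (x-w) \<le> fY ?j (a-w)"
      using that canon_tri_iff[OF j] by auto
    define Dx where "Dx = fX i (x-w)"
    define Dy where "Dy = fY i (x-w)"
    have c1: "(s3/2)*Dx - Dy/2 \<ge> s3 * \<bar>- Dx/2 - (s3/2)*Dy\<bar>"
      using c(1) unfolding nxt2[OF i] Dx_def Dy_def by simp
    have "fX i (a-w) = - dx" "fY i (a-w) = - dy" by (simp_all add: dx_def dy_def fX_diff fY_diff)
    hence c2: "(s3/2)*Dx - Dy/2 \<le> -(s3/2)*dx + dy/2"
      using c(2) unfolding nxt2[OF i] Dx_def Dy_def by simp
    have r: "Y + Dy \<ge> s3 * \<bar>X + Dx\<bar> \<and> Y + Dy \<le> Y \<and> s3 * Dx + Dy \<ge> 0" by (rule R4R[OF c1 c2 wY aY])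
    have "x - u = (w - u) + (x - w)" by simp
    hence "fY i (x-u) = Y + Dy" "fX i (x-u) = X + Dx" unfolding X_def Y_def Dx_def Dy_def
      by (metis fY_add, metis fX_add)
    thus ?thesis using r unfolding Y_def[symmetric] Dx_def Dy_def by simp
  qed
  show "canon_tri w ?j a \<subseteq> canon_tri u i w" using key canon_tri_iff[OF i] by blast
  show "u \<notin> canon_tri w ?j a"
  proof
    assume "u \<in> canon_tri w ?j a"
    hence "s3 * fX i (u-w) + fY i (u-w) \<ge> 0" using key by blast
    moreover have "fY i (u-w) = - Y" "fX i (u-w) = - X" by (simp_all add: X_def Y_def fX_diff fY_diff)
    ultimately have "Y \<le> - (s3 * X)" by simp
    moreover have "- (s3 * X) \<le> s3 * \<bar>X\<bar>" using abs_le[of X "s3 * \<bar>X\<bar>"] by simp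
    ultimately show False using wY by linarith
  qed
qed

definition emp :: "complex set \<Rightarrow> complex \<Rightarrow> nat \<Rightarrow> complex \<Rightarrow> nat \<Rightarrow> bool" where
  "emp P u i w j \<longleftrightarrow> \<not> (\<exists>p\<in>P. p \<in> canon_tri u i w \<and> in_pos_cone w j p)"

definition Qc :: "complex set \<Rightarrow> complex \<Rightarrow> complex \<Rightarrow> nat \<Rightarrow> bool" where
  "Qc P u w i \<longleftrightarrow>
     goodp P u w (canon_tri u i w) (s3 * fY i (w-u) + \<bar>fX i (w-u)\<bar>) \<and>
     (emp P u i w ((i+1) mod 3) \<longrightarrow> goodp P u w (canon_tri u i w) (s3 * fY i (w-u) - fX i (w-u))) \<and>
     (emp P u i w ((i+2) mod 3) \<longrightarrow> goodp P u w (canon_tri u i w) (s3 * fY i (w-u) + fX i (w-u)))"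

lemma card_less: "finite P \<Longrightarrow> S \<subseteq> T \<Longrightarrow> u \<in> P \<Longrightarrow> u \<in> T \<Longrightarrow> u \<notin> S \<Longrightarrow> card (P \<inter> S) < card (P \<inter> T)"
  by (rule psubset_card_mono) auto

lemma strict_cone: fixes x y :: real
  assumes "y \<ge> s3 * \<bar>x\<bar>" "y \<noteq> s3 * x" "y \<noteq> - s3 * x" shows "y > s3 * \<bar>x\<bar>"
proof -
  have "s3 * \<bar>x\<bar> = s3 * x \<or> s3 * \<bar>x\<bar> = - s3 * x" by (cases "x \<ge> 0") auto
  thus ?thesis using assms by auto
qed

lemma core:
  assumes fin: "finite P" and gp: "gen_pos P"
  shows "card (P \<inter> canon_tri u i w) = n \<Longrightarrow> u \<in> P \<Longrightarrow> w \<in> P \<Longrightarrow> in_pos_cone u i w \<Longrightarrow> Qc P u w i"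
proof (induction n arbitrary: u w i rule: less_induct)
  case (less n u w i)
  have uP: "u \<in> P" and wP: "w \<in> P" and uw: "in_pos_cone u i w" using less.prems by auto
  have i: "i < 3" using uw by (simp add: in_pos_cone_def)
  define T where "T = canon_tri u i w"
  define C where "C = {p \<in> P. in_pos_cone u i p}"
  have Cfin: "finite C" using fin C_def by simp
  have wC: "w \<in> C" using wP uw C_def by simp
  obtain a where "is_arg_min (\<lambda>p. fY i (p - u)) (\<lambda>p. p \<in> C) a"
    using ex_is_arg_min_if_finite[OF Cfin, of "\<lambda>p. fY i (p-u)"] wC by blast
  hence aC: "a \<in> C" and amin: "\<And>p. p \<in> C \<Longrightarrow> fY i (a-u) \<le> fY i (p-u)"
    unfolding is_arg_min_def by (auto simp: not_less)
  have aP: "a \<in> P" and ua: "in_pos_cone u i a" using aC C_def by auto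
  have amin': "\<forall>x\<in>P. in_pos_cone u i x \<longrightarrow> inner (a - u) (bis i) \<le> inner (x - u) (bis i)"
    using amin C_def by (auto simp: fY_def)
  have "half_theta6_dedge P u a" unfolding half_theta6_dedge_def
    using uP aP ua i amin' by blast
  hence edge: "half_theta6_edge P u a" by (simp add: half_theta6_edge_def)
  define X where "X = fX i (w-u)"
  define Y where "Y = fY i (w-u)"
  define ax where "ax = fX i (a-u)"
  define ay where "ay = fY i (a-u)"
  have wc: "Y > s3 * \<bar>X\<bar>" using uw by (simp add: in_pos_cone_iff X_def Y_def)
  have ac: "ay > s3 * \<bar>ax\<bar>" using ua by (simp add: in_pos_cone_iff ax_def ay_def)
  have ayY: "ay \<le> Y" using amin[OF wC] by (simp add: ay_def Y_def)
  have nn: "s3 * \<bar>X\<bar> \<ge> 0" "s3 * \<bar>ax\<bar> \<ge> 0" by simp_all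
  have Y0: "Y \<ge> 0" using wc nn by linarith
  have uT: "u \<in> T" unfolding T_def canon_tri_iff[OF i] using Y0 by (simp add: fzero Y_def)
  have aT: "a \<in> T" unfolding T_def canon_tri_iff[OF i] using ac ayY by (simp add: ax_def ay_def Y_def)
  have "dist u a = norm (a - u)" by (simp add: dist_norm norm_minus_commute)
  also have "\<dots> = sqrt (ax^2 + ay^2)" using frame_norm[OF i] by (simp add: ax_def ay_def)
  finally have dua: "dist u a \<le> s3 * ay - \<bar>ax\<bar>" using R1[OF ac] by simp
  have nobelow: False if p: "p \<in> P" "p \<in> T" "p \<noteq> u" "fY i (p - a) < 0" for p
  proof -
    have c: "fY i (p-u) \<ge> s3 * \<bar>fX i (p-u)\<bar>" using p(2) T_def canon_tri_iff[OF i] by auto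
    have g: "fY i (p - u) \<noteq> 0 \<and> fY i (p - u) \<noteq> s3 * fX i (p - u) \<and> fY i (p - u) \<noteq> - s3 * fX i (p - u)"
      using gp_frame[OF gp uP p(1) p(3)[symmetric] i] .
    have "fY i (p-u) > s3 * \<bar>fX i (p-u)\<bar>" using strict_cone[OF c] g by blast
    hence "p \<in> C" using p(1) i by (simp add: C_def in_pos_cone_iff)
    hence "ay \<le> fY i (p-u)" using amin by (simp add: ay_def)
    moreover have "fY i (p-u) = fY i (p-a) + ay" by (simp add: ay_def fY_diff)
    ultimately show False using p(4) by linarith
  qed
  show "Qc P u w i"
  proof (cases "a = w")
    case True
    have d: "dist u w \<le> s3 * Y - \<bar>X\<bar>" using dua True by (simp add: ax_def ay_def X_def Y_def)
    have wT: "w \<in> T" using aT True by simp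
    have "X \<le> \<bar>X\<bar>" "- X \<le> \<bar>X\<bar>" by simp_all
    hence "dist u w \<le> s3 * Y + \<bar>X\<bar>" "dist u w \<le> s3 * Y - X" "dist u w \<le> s3 * Y + X" using d by linarith+
    moreover have "half_theta6_edge P u w" using edge True by simp
    ultimately show ?thesis unfolding Qc_def T_def[symmetric] X_def[symmetric] Y_def[symmetric]
      using goodp_edge uT wT by blast
  next
    case False
    define dx where "dx = fX i (w-a)"
    define dy where "dy = fY i (w-a)"
    have dxe: "dx = X - ax" "dy = Y - ay" by (simp_all add: dx_def dy_def X_def Y_def ax_def ay_def fX_diff fY_diff)
    have g: "dy \<noteq> 0 \<and> dy \<noteq> s3 * dx \<and> dy \<noteq> - s3 * dx"
      unfolding dx_def dy_def using gp_frame[OF gp aP wP False i] .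
    have dy0: "dy > 0" using g dxe ayY by linarith
    have s3dy: "s3 * dy = s3 * Y - s3 * ay" by (simp add: dxe right_diff_distrib)
    have axa: "ax \<le> \<bar>ax\<bar>" "- ax \<le> \<bar>ax\<bar>" "X \<le> \<bar>X\<bar>" "- X \<le> \<bar>X\<bar>" by simp_all
    have tri: "\<bar>dx\<bar> \<le> \<bar>X\<bar> + \<bar>ax\<bar>" unfolding dxe by (rule abs_triangle_ineq4)
    consider (P) "dy > s3 * \<bar>dx\<bar>" | (L) "dx > 0" "dy < s3 * dx" | (R) "dx < 0" "dy < - s3 * dx"
    proof -
      show ?thesis
      proof (cases "dy > s3 * \<bar>dx\<bar>")
        case True thus ?thesis using that(1) by blast
      next
        case nP: False
        show ?thesis
        proof (cases "dx > 0")
          case True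
          hence "\<bar>dx\<bar> = dx" by simp
          hence "dy < s3 * dx" using nP g by auto
          thus ?thesis using that(2) True by blast
        next
          case False
          have "dx \<noteq> 0" using nP dy0 by auto
          hence dn: "dx < 0" using False by simp
          hence "\<bar>dx\<bar> = - dx" by simp
          hence "dy < - s3 * dx" using nP g by auto
          thus ?thesis using that(3) dn by blast
        qed
      qed
    qed
    then show ?thesis
    proof cases
      case P
      have aw: "in_pos_cone a i w" using P i by (simp add: in_pos_cone_iff dx_def dy_def)
      note sub = containP[OF i ua, of w]
      have cl: "card (P \<inter> canon_tri a i w) < n"
        using card_less[OF fin sub(1) uP uT[unfolded T_def] sub(2)] less.prems(1) by simp
      have Q': "Qc P a w i" using less.IH[OF cl refl aP wP aw] .
      have em: "emp P a i w j" if "emp P u i w j" for j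
        using that sub(1) unfolding emp_def by blast
      have b1: "dist u a + (s3 * dy + \<bar>dx\<bar>) \<le> s3 * Y + \<bar>X\<bar>" using dua s3dy tri by linarith
      have b2: "dist u a + (s3 * dy - dx) \<le> s3 * Y - X" using dua s3dy dxe axa by linarith
      have b3: "dist u a + (s3 * dy + dx) \<le> s3 * Y + X" using dua s3dy dxe axa by linarith
      show ?thesis
        unfolding Qc_def X_def[symmetric] Y_def[symmetric]
        using Q' em goodp_prepend[OF _ edge sub(1) uT[unfolded T_def]] b1 b2 b3
        unfolding Qc_def dx_def[symmetric] dy_def[symmetric] by blast
    next
      case L
      define j where "j = (i+1) mod 3"
      have j: "j < 3" "(j+1) mod 3 = (i+2) mod 3" using mod_facts[OF i] by (simp_all add: j_def)
      have ea: "fX i (a-w) = - dx" "fY i (a-w) = - dy" by (simp_all add: dx_def dy_def fX_diff fY_diff)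
      have fj: "fY j (a-w) = (s3/2)*dx + dy/2" "fX j (a-w) = dx/2 - (s3/2)*dy"
        unfolding j_def nxt1[OF i] ea by simp_all
      have wa: "in_pos_cone w j a" using R3L[OF dy0 L(2)] j by (simp add: in_pos_cone_iff fj)
      note sub = containL[OF i ua uw]
      have cl: "card (P \<inter> canon_tri w j a) < n"
        using card_less[OF fin sub(1) uP uT[unfolded T_def] sub(2)] less.prems(1) by (simp add: j_def)
      have Q': "Qc P w a j" using less.IH[OF cl refl wP aP wa] .
      have em: "emp P w j a ((j+1) mod 3)" unfolding emp_def
      proof
        assume "\<exists>p\<in>P. p \<in> canon_tri w j a \<and> in_pos_cone a ((j + 1) mod 3) p"
        then obtain p where p: "p \<in> P" "p \<in> canon_tri w j a" "in_pos_cone a ((i+2) mod 3) p"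
          using j by auto
        have "fY ((i+2) mod 3) (p-a) > s3 * \<bar>fX ((i+2) mod 3) (p-a)\<bar>" using p(3) in_pos_cone_iff by blast
        hence "fY i (p-a) < 0" unfolding nxt2[OF i] by (rule Rneg2)
        moreover have "p \<in> T" "p \<noteq> u" using p(2) sub unfolding T_def j_def by auto
        ultimately show False using nobelow p(1) by blast
      qed
      have val: "s3 * fY j (a-w) - fX j (a-w) = dx + s3 * dy" unfolding fj by (simp add: field_simps)
      have G: "goodp P a w (canon_tri w j a) (dx + s3 * dy)"
        using Q' em unfolding Qc_def val by (blast intro: goodp_rev)
      have b1: "dist u a + (dx + s3 * dy) \<le> s3 * Y + \<bar>X\<bar>" using dua s3dy dxe axa by linarith
      have b3: "dist u a + (dx + s3 * dy) \<le> s3 * Y + X" using dua s3dy dxe axa by linarith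
      have ne: "\<not> emp P u i w ((i+1) mod 3)" unfolding emp_def using aP aT wa T_def j_def by blast
      show ?thesis
        unfolding Qc_def X_def[symmetric] Y_def[symmetric]
        using goodp_prepend[OF G edge sub(1)[folded j_def] uT[unfolded T_def] b1]
              goodp_prepend[OF G edge sub(1)[folded j_def] uT[unfolded T_def] b3] ne by blast
    next
      case R
      define j where "j = (i+2) mod 3"
      have j: "j < 3" "(j+2) mod 3 = (i+1) mod 3" using mod_facts[OF i] by (simp_all add: j_def)
      have ea: "fX i (a-w) = - dx" "fY i (a-w) = - dy" by (simp_all add: dx_def dy_def fX_diff fY_diff)
      have fj: "fY j (a-w) = -(s3/2)*dx + dy/2" "fX j (a-w) = dx/2 + (s3/2)*dy"
        unfolding j_def nxt2[OF i] ea by simp_all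
      have wa: "in_pos_cone w j a" using R3R[OF dy0 R(2)] j by (simp add: in_pos_cone_iff fj)
      note sub = containR[OF i ua uw]
      have cl: "card (P \<inter> canon_tri w j a) < n"
        using card_less[OF fin sub(1) uP uT[unfolded T_def] sub(2)] less.prems(1) by (simp add: j_def)
      have Q': "Qc P w a j" using less.IH[OF cl refl wP aP wa] .
      have em: "emp P w j a ((j+2) mod 3)" unfolding emp_def
      proof
        assume "\<exists>p\<in>P. p \<in> canon_tri w j a \<and> in_pos_cone a ((j + 2) mod 3) p"
        then obtain p where p: "p \<in> P" "p \<in> canon_tri w j a" "in_pos_cone a ((i+1) mod 3) p"
          using j by auto
        have "fY ((i+1) mod 3) (p-a) > s3 * \<bar>fX ((i+1) mod 3) (p-a)\<bar>" using p(3) in_pos_cone_iff by blast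
        hence "fY i (p-a) < 0" unfolding nxt1[OF i] by (rule Rneg1)
        moreover have "p \<in> T" "p \<noteq> u" using p(2) sub unfolding T_def j_def by auto
        ultimately show False using nobelow p(1) by blast
      qed
      have val: "s3 * fY j (a-w) + fX j (a-w) = - dx + s3 * dy" unfolding fj by (simp add: field_simps)
      have G: "goodp P a w (canon_tri w j a) (- dx + s3 * dy)"
        using Q' em unfolding Qc_def val by (blast intro: goodp_rev)
      have b1: "dist u a + (- dx + s3 * dy) \<le> s3 * Y + \<bar>X\<bar>" using dua s3dy dxe axa by linarith
      have b2: "dist u a + (- dx + s3 * dy) \<le> s3 * Y - X" using dua s3dy dxe axa by linarith
      have ne: "\<not> emp P u i w ((i+2) mod 3)" unfolding emp_def using aP aT wa T_def j_def by blast
      show ?thesis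
        unfolding Qc_def X_def[symmetric] Y_def[symmetric]
        using goodp_prepend[OF G edge sub(1)[folded j_def] uT[unfolded T_def] b1]
              goodp_prepend[OF G edge sub(1)[folded j_def] uT[unfolded T_def] b2] ne by blast
    qed
  qed
qed



lemma bound_eq:
  assumes uw: "in_pos_cone u i w"
  shows "(sqrt 3 * cos (seg_angle u w (opp_mid u i w)) + sin (seg_angle u w (opp_mid u i w))) * dist u w
         = s3 * fY i (w-u) + \<bar>fX i (w-u)\<bar>"
proof -
  have i: "i < 3" using uw by (simp add: in_pos_cone_def)
  define X where "X = fX i (w-u)"
  define Y where "Y = fY i (w-u)"
  define r where "r = norm (w - u)"
  have wc: "Y > s3 * \<bar>X\<bar>" using uw by (simp add: in_pos_cone_iff X_def Y_def)
  have nn: "s3 * \<bar>X\<bar> \<ge> 0" by simp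
  have Y0: "Y > 0" using wc nn by linarith
  have r: "r = sqrt (X^2 + Y^2)" using frame_norm[OF i] by (simp add: r_def X_def Y_def)
  have r2: "r^2 = X^2 + Y^2" using r by simp
  have Yr: "Y \<le> r" unfolding r by (rule real_le_rsqrt) simp
  have r0: "r > 0" using Y0 Yr by linarith
  have nb: "norm (bis i) = 1" by (simp add: bis_def)
  have m': "opp_mid u i w - u = Y *\<^sub>R bis i" by (simp add: opp_mid_def Y_def fY_def of_real_def)
  have ip: "inner (w - u) (opp_mid u i w - u) = Y * Y" unfolding m' by (simp add: Y_def fY_def)
  have nm: "norm (opp_mid u i w - u) = Y" unfolding m' using nb Y0 by simp
  have arg: "inner (w - u) (opp_mid u i w - u) / (norm (w - u) * norm (opp_mid u i w - u)) = Y / r"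
    unfolding ip nm r_def[symmetric] using Y0 by simp
  have t1: "\<bar>Y / r\<bar> \<le> 1" using Y0 Yr r0 by simp
  have c: "cos (seg_angle u w (opp_mid u i w)) = Y / r"
  proof -
    have "- 1 \<le> Y / r" "Y / r \<le> 1" using t1 unfolding abs_le_iff by linarith+
    thus ?thesis unfolding seg_angle_def arg by (rule cos_arccos)
  qed
  have "sin (seg_angle u w (opp_mid u i w)) = sqrt (1 - (Y/r)^2)"
    unfolding seg_angle_def arg using sin_arccos_abs[OF t1] .
  also have "1 - (Y/r)^2 = (\<bar>X\<bar> / r)^2"
  proof -
    have rr: "r^2 > 0" using r0 by simp
    have "1 - (Y/r)^2 = (r^2 - Y^2) / r^2" using rr by (simp add: power_divide diff_divide_distrib)
    also have "\<dots> = X^2 / r^2" using r2 by simp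
    also have "\<dots> = (\<bar>X\<bar> / r)^2" by (simp add: power_divide)
    finally show ?thesis .
  qed
  also have "sqrt ((\<bar>X\<bar> / r)^2) = \<bar>X\<bar> / r" using r0 by simp
  finally have sn: "sin (seg_angle u w (opp_mid u i w)) = \<bar>X\<bar> / r" .
  have d: "dist u w = r" by (simp add: r_def dist_norm norm_minus_commute)
  show ?thesis unfolding c sn d X_def[symmetric] Y_def[symmetric] using r0 by (simp add: field_simps)
qed

theorem theorem1:
  fixes P :: "complex set" and u w :: complex and i :: nat
  assumes "finite P" and "gen_pos P"
    and "u \<in> P" and "w \<in> P"
    and "in_pos_cone u i w"
  shows "\<exists>xs. is_path P xs \<and> hd xs = u \<and> last xs = w \<and>
           set xs \<subseteq> canon_tri u i w \<and>
           path_len xs \<le> (sqrt 3 * cos (seg_angle u w (opp_mid u i w))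
                           + sin (seg_angle u w (opp_mid u i w))) * dist u w"
proof -
  have "Qc P u w i" using core[OF assms(1,2) refl assms(3-5)] .
  hence "goodp P u w (canon_tri u i w) (s3 * fY i (w-u) + \<bar>fX i (w-u)\<bar>)" unfolding Qc_def by blast
  thus ?thesis unfolding goodp_def bound_eq[OF assms(5)] .
qed


end
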